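(* Let $t\ge 0$ be an integer. In the exponential-edge chip-firing process beginning with $2^{t+2}$ chips with distinct labels at site $0$, the final configuration (when no firing move is possible) has all chips in weakly sorted order: for any chips $a<b$, the final position of $a$ is at most the final position of $b$, regardless of the choices of firing moves made.
   Context: Exponential-edge graph with parameter $t$: the vertex set is $\mathbb{Z}$; for each $0\le k\le t$ there are $2^{t-k}$ parallel edges between $k$ and $k+1$ and $2^{t-k}$ parallel edges between $-k$ and $-k-1$; all other pairs of adjacent integers are joined by a single edge. If a site has $a$ edges to its left neighbor and $b$ edges to its right neighbor, a firing move at that site chooses $a+b$ chips present there and sends the $a$ smallest of them to the left neighbor and the $b$ largest to the right neighbor. *)

theory Defs
  imports Main
begin

text \<open>Number of parallel edges between sites i and i+1 in the exponential-edge
graph with parameter t.  For 0 \<le> k \<le> t there are 2^(t-k) edges between k and k+1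
and between -k and -k-1 (i.e. between i and i+1 with i = -k-1); all other
adjacent pairs have one edge.\<close>
definition edges :: "nat \<Rightarrow> int \<Rightarrow> nat" where
  "edges t i =
     (if 0 \<le> i \<and> i \<le> int t then 2 ^ (t - nat i)
      else if - int t - 1 \<le> i \<and> i \<le> -1 then 2 ^ (t - nat (- i - 1))
      else 1)"

definition left_edges :: "nat \<Rightarrow> int \<Rightarrow> nat" where
  "left_edges t v = edges t (v - 1)"

definition right_edges :: "nat \<Rightarrow> int \<Rightarrow> nat" where
  "right_edges t v = edges t v"

text \<open>Chips are labelled 0,...,N-1 (labels ordered as naturals); a configuration
assigns to each chip its site.  Chips at site v among chips < N:\<close>
definition chips_at :: "nat \<Rightarrow> (nat \<Rightarrow> int) \<Rightarrow> int \<Rightarrow> nat set" where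
  "chips_at N c v = {i. i < N \<and> c i = v}"

text \<open>One firing move at site v using the chosen set S of a+b chips there:
the a smallest go left, the b largest go right.\<close>
definition fire :: "nat \<Rightarrow> int \<Rightarrow> nat set \<Rightarrow> (nat \<Rightarrow> int) \<Rightarrow> (nat \<Rightarrow> int)" where
  "fire t v S c = (\<lambda>i. if i \<in> S then
       (if card {j \<in> S. j < i} < left_edges t v then v - 1 else v + 1)
     else c i)"

definition step :: "nat \<Rightarrow> nat \<Rightarrow> (nat \<Rightarrow> int) \<Rightarrow> (nat \<Rightarrow> int) \<Rightarrow> bool" where
  "step t N c c' \<longleftrightarrow> (\<exists>v S. S \<subseteq> chips_at N c v \<and>
       card S = left_edges t v + right_edges t v \<and> c' = fire t v S c)"

definition stable :: "nat \<Rightarrow> nat \<Rightarrow> (nat \<Rightarrow> int) \<Rightarrow> bool" where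
  "stable t N c \<longleftrightarrow> (\<forall>v. card (chips_at N c v) < left_edges t v + right_edges t v)"

end

theory Submission
  imports Defs
begin


definition rk :: "nat set \<Rightarrow> nat \<Rightarrow> nat" where
  "rk S i = card {j \<in> S. j < i}"

lemma rk_mono_strict:
  assumes "finite S" "i \<in> S" "i < i'"
  shows "rk S i < rk S i'"
proof -
  have "{j \<in> S. j < i} \<subset> {j \<in> S. j < i'}" using assms by auto
  then show ?thesis unfolding rk_def using assms(1) by (simp add: psubset_card_mono)
qed

lemma rk_le_mono:
  assumes "finite S" "i \<le> i'"
  shows "rk S i \<le> rk S i'"
  unfolding rk_def using assms by (intro card_mono) auto

lemma rk_less_card:
  assumes "finite S" "i \<in> S"
  shows "rk S i < card S"
  unfolding rk_def using assms by (intro psubset_card_mono) auto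

lemma rk_bij:
  assumes "finite S"
  shows "bij_betw (rk S) S {..<card S}"
proof -
  have inj: "inj_on (rk S) S"
  proof (rule inj_onI)
    fix x y assume "x \<in> S" "y \<in> S" "rk S x = rk S y"
    then show "x = y" using rk_mono_strict[OF assms] by (metis less_irrefl nat_neq_iff)
  qed
  have sub: "rk S ` S \<subseteq> {..<card S}" using rk_less_card[OF assms] by auto
  have "card (rk S ` S) = card S" using card_image[OF inj] .
  then have "rk S ` S = {..<card S}"
    using sub by (intro card_subset_eq) auto
  then show ?thesis using inj unfolding bij_betw_def by simp
qed

lemma card_rk_less:
  assumes "finite S" "l \<le> card S"
  shows "card {i \<in> S. rk S i < l} = l"
proof -
  have bj: "bij_betw (rk S) S {..<card S}" using rk_bij[OF assms(1)] .
  have inj: "inj_on (rk S) {i \<in> S. rk S i < l}"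
    using bj unfolding bij_betw_def by (auto intro: inj_on_subset)
  have "rk S ` {i \<in> S. rk S i < l} = {y \<in> rk S ` S. y < l}" by auto
  also have "\<dots> = {..<l}" using bj assms(2) unfolding bij_betw_def by auto
  finally show ?thesis using card_image[OF inj] by simp
qed

lemma card_rk_ge:
  assumes "finite S" "l \<le> card S"
  shows "card {i \<in> S. \<not> rk S i < l} = card S - l"
proof -
  have "{i \<in> S. \<not> rk S i < l} = S - {i \<in> S. rk S i < l}" by auto
  then show ?thesis using card_rk_less[OF assms] assms(1)
    by (simp add: card_Diff_subset)
qed

lemma rk_lower:
  assumes "finite S" "\<forall>j\<in>S. g \<le> j" "L \<le> rk S i" "i \<in> S"
  shows "g + L \<le> i"
proof -
  have "{j \<in> S. j < i} \<subseteq> {g..<i}" using assms(2) by auto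
  then have "rk S i \<le> card {g..<i}" unfolding rk_def by (intro card_mono) auto
  then show ?thesis using assms(2-4) by force
qed

lemma rk_lt_imp:
  assumes "finite S" "rk S x < rk S y"
  shows "x < y"
  using rk_le_mono[OF assms(1), of y x] assms(2) by (cases "y \<le> x") auto

lemma card_split_rk:
  assumes "finite S" "s \<in> S"
  shows "card {j \<in> S. s < j} + rk S s + 1 = card S"
proof -
  have "S = {j \<in> S. s < j} \<union> {j \<in> S. j < s} \<union> {s}" using assms by auto
  moreover have "card ({j \<in> S. s < j} \<union> {j \<in> S. j < s} \<union> {s}) = card {j \<in> S. s < j} + card {j \<in> S. j < s} + 1"
    using assms(1) by (subst card_Un_disjoint; auto simp: card_Un_disjoint)+
  ultimately show ?thesis unfolding rk_def by simp
qed

lemma edges_ge1: "1 \<le> edges t v"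
  unfolding edges_def by auto

lemma edges_low: "0 \<le> v \<Longrightarrow> v \<le> int t \<Longrightarrow> edges t v = 2 ^ (t - nat v)"
  unfolding edges_def by auto

lemma edges_nat: "k \<le> t \<Longrightarrow> edges t (int k) = 2 ^ (t - k)"
  unfolding edges_def by auto

lemma edges_high: "int t < v \<Longrightarrow> edges t v = 1"
  unfolding edges_def by auto

lemma edges_sym: "edges t (- v - 1) = edges t v"
  unfolding edges_def by (auto simp: nat_diff_distrib)

lemma le0: "left_edges t 0 = 2 ^ t" unfolding left_edges_def edges_def by auto
lemma re0: "right_edges t 0 = 2 ^ t" unfolding right_edges_def edges_def by auto

definition cnt :: "nat \<Rightarrow> (nat \<Rightarrow> int) \<Rightarrow> int set \<Rightarrow> nat" where
  "cnt N c X = card {i. i < N \<and> c i \<in> X}"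

lemma cnt_chips: "card (chips_at N c v) = cnt N c {v}"
  unfolding cnt_def chips_at_def by simp

lemma cnt_Un: "X \<inter> Y = {} \<Longrightarrow> cnt N c (X \<union> Y) = cnt N c X + cnt N c Y"
proof -
  assume d: "X \<inter> Y = {}"
  have "{i. i < N \<and> c i \<in> X \<union> Y} = {i. i < N \<and> c i \<in> X} \<union> {i. i < N \<and> c i \<in> Y}" by auto
  moreover have "card ({i. i < N \<and> c i \<in> X} \<union> {i. i < N \<and> c i \<in> Y}) = card {i. i < N \<and> c i \<in> X} + card {i. i < N \<and> c i \<in> Y}"
    using d by (intro card_Un_disjoint) auto
  ultimately show ?thesis unfolding cnt_def by simp
qed

lemma cnt_mono: "X \<subseteq> Y \<Longrightarrow> cnt N c X \<le> cnt N c Y"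
  unfolding cnt_def by (intro card_mono) auto

lemma cnt_UNIV: "cnt N c UNIV = N"
  unfolding cnt_def by simp

lemma cnt_le_N: "cnt N c X \<le> N"
  using cnt_mono[of X UNIV N c] cnt_UNIV by simp

definition refl :: "nat \<Rightarrow> (nat \<Rightarrow> int) \<Rightarrow> nat \<Rightarrow> int" where
  "refl N c i = (if i < N then - c (N - 1 - i) else c i)"

lemma refl_refl[simp]: "refl N (refl N c) = c"
  unfolding refl_def by (rule ext) auto

lemma cnt_refl: "cnt N (refl N c) X = cnt N c (uminus ` X)"
proof -
  have "{i. i < N \<and> refl N c i \<in> X} = (\<lambda>i. N - 1 - i) ` {i. i < N \<and> c i \<in> uminus ` X}"
  proof (rule set_eqI, rule iffI)
    fix x assume "x \<in> {i. i < N \<and> refl N c i \<in> X}"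
    then have "x < N" "- c (N - 1 - x) \<in> X" unfolding refl_def by auto
    then show "x \<in> (\<lambda>i. N - 1 - i) ` {i. i < N \<and> c i \<in> uminus ` X}"
      by (intro image_eqI[of _ _ "N - 1 - x"]) (auto intro: image_eqI[of _ _ "- c (N - 1 - x)"])
  next
    fix x assume "x \<in> (\<lambda>i. N - 1 - i) ` {i. i < N \<and> c i \<in> uminus ` X}"
    then obtain j where "x = N - 1 - j" "j < N" "c j \<in> uminus ` X" by auto
    then show "x \<in> {i. i < N \<and> refl N c i \<in> X}" unfolding refl_def by auto
  qed
  moreover have "inj_on (\<lambda>i. N - 1 - i) {i. i < N \<and> c i \<in> uminus ` X}"
    by (rule inj_onI) auto
  ultimately show ?thesis unfolding cnt_def by (simp add: card_image)
qed

lemma cnt_refl_ge: "cnt N (refl N c) {x. a \<le> x} = cnt N c {x. x \<le> - a}"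
proof -
  have "uminus ` {x. a \<le> x} = {x::int. x \<le> - a}"
    by (auto intro: image_eqI[of _ _ "- _"])
  then show ?thesis by (simp add: cnt_refl)
qed

lemma cnt_refl_le: "cnt N (refl N c) {x. x \<le> - a} = cnt N c {x. a \<le> x}"
  using cnt_refl_ge[of N "refl N c" a] by simp

lemma cnt_refl_single: "cnt N (refl N c) {v} = cnt N c {- v}"
  by (simp add: cnt_refl)

definition legal :: "nat \<Rightarrow> nat \<Rightarrow> (nat \<Rightarrow> int) \<Rightarrow> int \<Rightarrow> nat set \<Rightarrow> bool" where
  "legal t N c v S \<longleftrightarrow> S \<subseteq> chips_at N c v \<and> card S = left_edges t v + right_edges t v"

lemma step_legal: "step t N c c' \<longleftrightarrow> (\<exists>v S. legal t N c v S \<and> c' = fire t v S c)"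
  unfolding step_def legal_def by auto

lemma fire_rk: "fire t v S c i = (if i \<in> S then (if rk S i < left_edges t v then v - 1 else v + 1) else c i)"
  unfolding fire_def rk_def by simp

lemma legal_fin: "legal t N c v S \<Longrightarrow> finite S"
  unfolding legal_def chips_at_def by (auto intro: finite_subset[of S "{..<N}"])

lemma legal_sub: "legal t N c v S \<Longrightarrow> i \<in> S \<Longrightarrow> i < N \<and> c i = v"
  unfolding legal_def chips_at_def by auto

lemma fire_cnt:
  assumes L: "legal t N c v S"
  shows "int (cnt N (fire t v S c) X) = int (cnt N c X)
     - (if v \<in> X then int (left_edges t v + right_edges t v) else 0)
     + (if v - 1 \<in> X then int (left_edges t v) else 0)
     + (if v + 1 \<in> X then int (right_edges t v) else 0)"
proof -
  let ?l = "left_edges t v" and ?r = "right_edges t v"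
  let ?c' = "fire t v S c"
  have fin: "finite S" using legal_fin[OF L] .
  have cS: "card S = ?l + ?r" using L unfolding legal_def by simp
  have sub: "\<And>i. i \<in> S \<Longrightarrow> i < N \<and> c i = v" using legal_sub[OF L] by blast
  let ?A = "{i. i < N \<and> c i \<in> X}"
  let ?B = "{i. i < N \<and> ?c' i \<in> X}"
  let ?R = "?A - S"
  have fR: "finite ?R" by simp
  have A_eq: "?A = ?R \<union> (if v \<in> X then S else {})" using sub by auto
  have cA: "card ?A = card ?R + (if v \<in> X then card S else 0)"
  proof (cases "v \<in> X")
    case True
    then have "?A = ?R \<union> S" using A_eq by simp
    moreover have "card (?R \<union> S) = card ?R + card S" using fin by (intro card_Un_disjoint) auto
    ultimately show ?thesis using True by simp
  next
    case False
    then show ?thesis using A_eq by simp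
  qed
  let ?SL = "{i \<in> S. rk S i < ?l}" and ?SR = "{i \<in> S. \<not> rk S i < ?l}"
  have B_eq: "?B = ?R \<union> ((if v - 1 \<in> X then ?SL else {}) \<union> (if v + 1 \<in> X then ?SR else {}))"
    using sub by (auto simp: fire_rk split: if_splits)
  have cSL: "card ?SL = ?l" using card_rk_less[OF fin] cS by simp
  have cSR: "card ?SR = ?r" using card_rk_ge[OF fin] cS by simp
  have c2: "card ((if v - 1 \<in> X then ?SL else {}) \<union> (if v + 1 \<in> X then ?SR else {}))
      = (if v - 1 \<in> X then ?l else 0) + (if v + 1 \<in> X then ?r else 0)"
    using fin cSL cSR by (subst card_Un_disjoint) auto
  have cB: "card ?B = card ?R + ((if v - 1 \<in> X then ?l else 0) + (if v + 1 \<in> X then ?r else 0))"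
    using fin c2 by (subst B_eq, subst card_Un_disjoint) auto
  show ?thesis unfolding cnt_def using cA cB cS by auto
qed

lemma le_neg: "left_edges t (- v) = right_edges t v"
  unfolding left_edges_def right_edges_def using edges_sym[of t v] by simp

lemma re_neg: "right_edges t (- v) = left_edges t v"
  unfolding left_edges_def right_edges_def using edges_sym[of t "v - 1"] by simp

lemma refl_legal:
  assumes L: "legal t N c v S"
  shows "legal t N (refl N c) (- v) ((\<lambda>i. N - 1 - i) ` S)
     \<and> refl N (fire t v S c) = fire t (- v) ((\<lambda>i. N - 1 - i) ` S) (refl N c)"
proof -
  let ?f = "\<lambda>i. N - 1 - i"
  let ?S' = "?f ` S"
  let ?l = "left_edges t v" and ?r = "right_edges t v"
  have fin: "finite S" using legal_fin[OF L] .
  have sub: "\<And>i. i \<in> S \<Longrightarrow> i < N \<and> c i = v" using legal_sub[OF L] by blast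
  have cS: "card S = ?l + ?r" using L unfolding legal_def by simp
  have inj: "inj_on ?f S"
  proof (rule inj_onI)
    fix x y assume "x \<in> S" "y \<in> S" "N - 1 - x = N - 1 - y"
    then show "x = y" using sub[of x] sub[of y] by linarith
  qed
  have cS': "card ?S' = card S" using card_image[OF inj] .
  have mem: "\<And>i. i < N \<Longrightarrow> (i \<in> ?S') = (N - 1 - i \<in> S)"
  proof -
    fix i assume "i < N"
    show "(i \<in> ?S') = (N - 1 - i \<in> S)"
    proof
      assume "i \<in> ?S'" then obtain j where "j \<in> S" "i = N - 1 - j" by auto
      then show "N - 1 - i \<in> S" using sub[of j] by (simp add: Suc_leI)
    next
      assume "N - 1 - i \<in> S" then show "i \<in> ?S'" using \<open>i < N\<close> by (intro image_eqI[of _ _ "N - 1 - i"]) auto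
    qed
  qed
  have S'N: "\<And>i. i \<in> ?S' \<Longrightarrow> i < N"
  proof -
    fix i assume "i \<in> ?S'"
    then obtain j where "j \<in> S" "i = N - 1 - j" by auto
    then show "i < N" using sub[of j] by linarith
  qed
  have leg: "legal t N (refl N c) (- v) ?S'"
    unfolding legal_def chips_at_def
  proof
    show "?S' \<subseteq> {i. i < N \<and> refl N c i = - v}"
    proof
      fix i assume "i \<in> ?S'"
      then obtain j where "j \<in> S" "i = N - 1 - j" by auto
      then show "i \<in> {i. i < N \<and> refl N c i = - v}" using sub[of j] unfolding refl_def
        by (auto simp: Suc_leI)
    qed
    show "card ?S' = left_edges t (- v) + right_edges t (- v)"
      using cS' cS le_neg re_neg by simp
  qed
  have rkflip: "\<And>s. s \<in> S \<Longrightarrow> rk ?S' (N - 1 - s) = card {j \<in> S. s < j}"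
  proof -
    fix s assume sS: "s \<in> S"
    have "{j \<in> ?S'. j < N - 1 - s} = ?f ` {j \<in> S. s < j}"
    proof (rule set_eqI, rule iffI)
      fix x assume "x \<in> {j \<in> ?S'. j < N - 1 - s}"
      then obtain j where "j \<in> S" "x = N - 1 - j" "x < N - 1 - s" by auto
      then show "x \<in> ?f ` {j \<in> S. s < j}" using sub[of j] sub[OF sS] by auto
    next
      fix x assume "x \<in> ?f ` {j \<in> S. s < j}"
      then obtain j where "j \<in> S" "x = N - 1 - j" "s < j" by auto
      then show "x \<in> {j \<in> ?S'. j < N - 1 - s}" using sub[of j] sub[OF sS] by auto
    qed
    moreover have "inj_on ?f {j \<in> S. s < j}" using inj by (rule inj_on_subset) auto
    ultimately show "rk ?S' (N - 1 - s) = card {j \<in> S. s < j}"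
      unfolding rk_def by (simp add: card_image)
  qed
  have fe: "refl N (fire t v S c) = fire t (- v) ?S' (refl N c)"
  proof (rule ext)
    fix i
    show "refl N (fire t v S c) i = fire t (- v) ?S' (refl N c) i"
    proof (cases "i < N")
      case False
      then have "i \<notin> S" "i \<notin> ?S'" using sub S'N by auto
      then show ?thesis using False unfolding refl_def by (simp add: fire_rk)
    next
      case True
      let ?s = "N - 1 - i"
      show ?thesis
      proof (cases "?s \<in> S")
        case False
        then show ?thesis using True mem[OF True] unfolding refl_def by (simp add: fire_rk)
      next
        case sS: True
        have iS': "i \<in> ?S'" using mem[OF True] sS by simp
        have ss: "N - 1 - ?s = i" using True by simp
        have rf: "rk ?S' i = card {j \<in> S. ?s < j}" using rkflip[OF sS] ss by simp
        have sp: "card {j \<in> S. ?s < j} + rk S ?s + 1 = card S" using card_split_rk[OF fin sS] .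
        have "(rk ?S' i < left_edges t (- v)) = (\<not> rk S ?s < ?l)"
          using rf sp cS le_neg by auto
        then show ?thesis using True sS iS' unfolding refl_def by (simp add: fire_rk)
      qed
    qed
  qed
  show ?thesis using leg fe by simp
qed

lemma refl_step: "step t N c c' \<Longrightarrow> step t N (refl N c) (refl N c')"
  unfolding step_legal using refl_legal by blast

lemma refl_stable: "stable t N c \<Longrightarrow> stable t N (refl N c)"
  unfolding stable_def
proof
  fix v assume H: "\<forall>v. card (chips_at N c v) < left_edges t v + right_edges t v"
  have "card (chips_at N c (- v)) < left_edges t (- v) + right_edges t (- v)" using H by simp
  then show "card (chips_at N (refl N c) v) < left_edges t v + right_edges t v"
    by (simp add: cnt_chips cnt_refl_single le_neg re_neg)
qed



definition PosA :: "nat \<Rightarrow> nat \<Rightarrow> (nat \<Rightarrow> int) \<Rightarrow> bool" where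
  "PosA t N c \<longleftrightarrow> (\<forall>i<N. 1 \<le> c i \<longrightarrow> 2 ^ t \<le> i)"
definition PosB :: "nat \<Rightarrow> nat \<Rightarrow> (nat \<Rightarrow> int) \<Rightarrow> bool" where
  "PosB t N c \<longleftrightarrow> (\<forall>i<N. 2 \<le> c i \<longrightarrow> c i \<le> int t + 2 \<and> N - 2 ^ (t + 2 - nat (c i)) \<le> i)"
definition PosC :: "nat \<Rightarrow> nat \<Rightarrow> (nat \<Rightarrow> int) \<Rightarrow> bool" where
  "PosC t N c \<longleftrightarrow> (cnt N c {x. 1 \<le> x} = 2 * 2 ^ t \<longrightarrow> (\<forall>i<N. c i = 0 \<longrightarrow> i < 3 * 2 ^ t))"
definition PosD :: "nat \<Rightarrow> nat \<Rightarrow> (nat \<Rightarrow> int) \<Rightarrow> bool" where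
  "PosD t N c \<longleftrightarrow> (\<forall>k::nat. edges t (int k) dvd cnt N c {x. int k + 1 \<le> x})"
definition Pos :: "nat \<Rightarrow> nat \<Rightarrow> (nat \<Rightarrow> int) \<Rightarrow> bool" where
  "Pos t N c \<longleftrightarrow> PosA t N c \<and> PosB t N c \<and> PosC t N c \<and> PosD t N c"
definition EE :: "nat \<Rightarrow> nat \<Rightarrow> (nat \<Rightarrow> int) \<Rightarrow> bool" where
  "EE t N c \<longleftrightarrow> (\<forall>i<N. c i = 0) \<or>
     (cnt N c {x. 1 \<le> x} \<in> {2 ^ t, 2 * 2 ^ t} \<and> cnt N c {x. x \<le> -1} \<in> {2 ^ t, 2 * 2 ^ t})"

lemma reflA: "PosA t N (refl N c) \<Longrightarrow> N = 4 * 2 ^ t \<Longrightarrow> i < N \<Longrightarrow> c i \<le> -1 \<Longrightarrow> i < 3 * 2 ^ t"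
proof -
  assume A: "PosA t N (refl N c)" and N: "N = 4 * 2 ^ t" and i: "i < N" "c i \<le> -1"
  have "N - 1 - i < N" using i by simp
  moreover have "refl N c (N - 1 - i) = - c i" unfolding refl_def using i by simp
  ultimately have "2 ^ t \<le> N - 1 - i" using A i unfolding PosA_def by auto
  then show ?thesis using N i(1) by arith
qed

lemma cnt_part0: "cnt N c {0} + cnt N c {x. 1 \<le> x} + cnt N c {x. x \<le> -1} = N"
proof -
  have "cnt N c ({0} \<union> {x. 1 \<le> x} \<union> {x. x \<le> -1}) = N"
  proof -
    have "{0} \<union> {x. 1 \<le> x} \<union> {x::int. x \<le> -1} = UNIV" by auto
    then show ?thesis using cnt_UNIV by simp
  qed
  moreover have "cnt N c ({0} \<union> {x. 1 \<le> x} \<union> {x. x \<le> -1}) = cnt N c {0} + cnt N c {x. 1 \<le> x} + cnt N c {x. x \<le> -1}"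
    by (subst cnt_Un, force, subst cnt_Un, force, simp)
  ultimately show ?thesis by simp
qed

lemma cnt_split_ge: "cnt N c {x. a \<le> x} = cnt N c {a} + cnt N c {x. a + 1 \<le> x}"
proof -
  have e: "{x. a \<le> x} = {a} \<union> {x. a + 1 \<le> x}" by auto
  have "cnt N c ({a} \<union> {x. a + 1 \<le> x}) = cnt N c {a} + cnt N c {x. a + 1 \<le> x}"
    by (rule cnt_Un) auto
  then show ?thesis by (simp only: e)
qed

lemma init_cnt: "(\<forall>i<N. c i = 0) \<Longrightarrow> cnt N c X = (if 0 \<in> X then N else 0)"
proof -
  assume "\<forall>i<N. c i = 0"
  then have "{i. i < N \<and> c i \<in> X} = (if 0 \<in> X then {..<N} else {})" by auto
  then show ?thesis unfolding cnt_def by simp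
qed

lemma ge_change:
  assumes L: "legal t N c v S"
  shows "int (cnt N (fire t v S c) {x. a \<le> x}) = int (cnt N c {x. a \<le> x})
     - (if v = a then int (left_edges t v) else 0) + (if v + 1 = a then int (right_edges t v) else 0)"
  using fire_cnt[OF L, of "{x. a \<le> x}"] by auto

lemma le_change:
  assumes L: "legal t N c v S"
  shows "int (cnt N (fire t v S c) {x. x \<le> b}) = int (cnt N c {x. x \<le> b})
     - (if v = b then int (right_edges t v) else 0) + (if v - 1 = b then int (left_edges t v) else 0)"
  using fire_cnt[OF L, of "{x. x \<le> b}"] by auto

lemma legal_card_le: "legal t N c v S \<Longrightarrow> left_edges t v + right_edges t v \<le> cnt N c {v}"
  unfolding legal_def using card_mono[of "chips_at N c v" S] cnt_chips[of N c v]
  by (metis chips_at_def finite_Collect_conjI finite_Collect_less_nat)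

lemma legal_init: "legal t N c v S \<Longrightarrow> \<forall>i<N. c i = 0 \<Longrightarrow> v = 0"
proof (rule ccontr)
  assume L: "legal t N c v S" and I: "\<forall>i<N. c i = 0" and v: "v \<noteq> 0"
  have "cnt N c {v} = 0" using init_cnt[OF I] v by simp
  then show False using legal_card_le[OF L] edges_ge1[of t "v - 1"] unfolding left_edges_def by simp
qed



lemma l1: "left_edges t 1 = 2 ^ t" unfolding left_edges_def using edges_nat[of 0 t] by simp

lemma PosA_step:
  assumes N: "N = 4 * 2 ^ t" and A: "PosA t N c" and L: "legal t N c v S"
  shows "PosA t N (fire t v S c)"
  unfolding PosA_def
proof (intro allI impI)
  fix i assume i: "i < N" "1 \<le> fire t v S c i"
  show "2 ^ t \<le> i"
  proof (cases "i \<in> S")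
    case False
    then show ?thesis using A i unfolding PosA_def by (simp add: fire_rk)
  next
    case True
    have ci: "c i = v" using legal_sub[OF L True] by simp
    show ?thesis
    proof (cases "v \<ge> 1")
      case True
      then show ?thesis using A i ci unfolding PosA_def by simp
    next
      case False
      then have "v = 0" "\<not> rk S i < left_edges t v" using i True by (auto simp: fire_rk split: if_splits)
      then have "2 ^ t \<le> rk S i" using le0 by simp
      then show ?thesis using rk_lower[OF legal_fin[OF L], of 0 "2 ^ t" i] True by simp
    qed
  qed
qed

lemma site1_right:
  assumes N: "N = 4 * 2 ^ t" and C: "PosC t N c" and AR: "PosA t N (refl N c)" and E: "EE t N c"
    and L: "legal t N c 1 S" and iS: "i \<in> S" and rk: "\<not> rk S i < left_edges t 1"
  shows "3 * 2 ^ t \<le> i"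
proof (rule ccontr)
  assume "\<not> 3 * 2 ^ t \<le> i"
  then have i3: "i < 3 * 2 ^ t" by simp
  have fin: "finite S" using legal_fin[OF L] .
  have cS: "card S = 2 ^ t + right_edges t 1" using L l1 unfolding legal_def by simp
  have r1: "1 \<le> right_edges t 1" unfolding right_edges_def using edges_ge1 .
  have n1: "card S \<le> cnt N c {1}" using legal_card_le[OF L] L unfolding legal_def by simp
  have ni: "\<not> (\<forall>i<N. c i = 0)" using legal_init[OF L] by auto
  have P1: "cnt N c {x. 1 \<le> x} \<in> {2 ^ t, 2 * 2 ^ t}" using E ni unfolding EE_def by auto
  have "cnt N c {1} \<le> cnt N c {x. 1 \<le> x}" by (rule cnt_mono) auto
  then have P1': "cnt N c {x. 1 \<le> x} = 2 * 2 ^ t" using P1 n1 cS r1 by auto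
  then have c0: "\<forall>j<N. c j = 0 \<longrightarrow> j < 3 * 2 ^ t" using C unfolding PosC_def by simp
  have cneg: "\<forall>j<N. c j \<le> -1 \<longrightarrow> j < 3 * 2 ^ t" using reflA[OF AR N] by blast
  let ?T = "{j. j < N \<and> c j \<in> {x. 1 \<le> x}}"
  have cT: "card ?T = 2 * 2 ^ t" using P1' unfolding cnt_def .
  have sub1: "{3 * 2 ^ t..<N} \<subseteq> ?T"
  proof
    fix j assume j: "j \<in> {3 * 2 ^ t..<N}"
    then have "\<not> c j = 0" "\<not> c j \<le> -1" using c0 cneg by auto
    then show "j \<in> ?T" using j by auto
  qed
  have cD: "card (?T - {3 * 2 ^ t..<N}) = 2 ^ t"
    using sub1 cT N by (subst card_Diff_subset) auto
  have U: "insert i {j \<in> S. j < i} \<subseteq> ?T - {3 * 2 ^ t..<N}"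
    using legal_sub[OF L] iS i3 by auto
  have "card (insert i {j \<in> S. j < i}) = rk S i + 1"
    unfolding rk_def using fin by simp
  moreover have "card (insert i {j \<in> S. j < i}) \<le> 2 ^ t"
    using card_mono[OF _ U] cD by simp
  ultimately show False using rk l1 by simp
qed

lemma PosB_step:
  assumes N: "N = 4 * 2 ^ t" and B: "PosB t N c" and C: "PosC t N c" and AR: "PosA t N (refl N c)"
    and E: "EE t N c" and L: "legal t N c v S"
  shows "PosB t N (fire t v S c)"
  unfolding PosB_def
proof (intro allI impI)
  fix i assume i: "i < N" "2 \<le> fire t v S c i"
  have fin: "finite S" using legal_fin[OF L] .
  show "fire t v S c i \<le> int t + 2 \<and> N - 2 ^ (t + 2 - nat (fire t v S c i)) \<le> i"
  proof (cases "i \<in> S")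
    case False
    then show ?thesis using B i unfolding PosB_def by (simp add: fire_rk)
  next
    case iS: True
    have ci: "c i = v" using legal_sub[OF L iS] by simp
    show ?thesis
    proof (cases "rk S i < left_edges t v")
      case True
      then have f: "fire t v S c i = v - 1" using iS by (simp add: fire_rk)
      then have v3: "3 \<le> v" using i by simp
      then have Bi: "v \<le> int t + 2" "N - 2 ^ (t + 2 - nat v) \<le> i" using B i ci unfolding PosB_def by auto
      have "(2::nat) ^ (t + 2 - nat v) \<le> 2 ^ (t + 2 - nat (v - 1))"
        by (rule power_increasing) (use v3 in auto)
      then have "N - 2 ^ (t + 2 - nat (v - 1)) \<le> N - 2 ^ (t + 2 - nat v)"
        by (rule diff_le_mono2)
      then have "N - 2 ^ (t + 2 - nat (v - 1)) \<le> i" using Bi(2) by (rule order_trans)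
      then show ?thesis using f Bi(1) by simp
    next
      case False
      then have f: "fire t v S c i = v + 1" using iS by (simp add: fire_rk)
      then have v1: "1 \<le> v" using i by simp
      show ?thesis
      proof (cases "v = 1")
        case True
        have "3 * 2 ^ t \<le> i" using site1_right[OF N C AR E] L iS False True by simp
        then show ?thesis using f True N by simp
      next
        case v2: False
        then have v2: "2 \<le> v" using v1 by simp
        have allS: "\<forall>j\<in>S. N - 2 ^ (t + 2 - nat v) \<le> j"
          using B legal_sub[OF L] v2 unfolding PosB_def by auto
        have vt: "v \<le> int t + 2" using B i ci v2 unfolding PosB_def by auto
        show ?thesis
        proof (cases "v = int t + 2")
          case True
          have "left_edges t v = 1" unfolding left_edges_def using True by (simp add: edges_high)
          then have "N - 2 ^ (t + 2 - nat v) + 1 \<le> i"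
            using rk_lower[OF fin allS, of 1 i] False iS by simp
          then show ?thesis using True i by simp
        next
          case False2: False
          define k where "k = nat v"
          have k: "2 \<le> k" "k \<le> t + 1" "v = int k" using v2 vt False2 unfolding k_def by auto
          have le: "left_edges t v = 2 ^ (t + 1 - k)"
            unfolding left_edges_def using edges_nat[of "k - 1" t] k by (simp add: of_nat_diff)
          have "N - 2 ^ (t + 2 - k) + 2 ^ (t + 1 - k) \<le> i"
            using rk_lower[OF fin allS, of "2 ^ (t + 1 - k)" i] False iS le k by simp
          moreover have "(2::nat) ^ (t + 2 - k) = 2 * 2 ^ (t + 1 - k)"
          proof -
            have "t + 2 - k = Suc (t + 1 - k)" using k by simp
            then show ?thesis by simp
          qed
          moreover have "(2::nat) ^ (t + 2 - k) \<le> N"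
            using N power_increasing[of "t + 2 - k" "t + 2" "2::nat"] by (simp add: power_add)
          moreover have "nat (v + 1) = k + 1" using k by simp
          ultimately show ?thesis using f k by auto
        qed
      qed
    qed
  qed
qed

lemma site0_full:
  assumes N: "N = 4 * 2 ^ t" and E: "EE t N c" and L: "legal t N c 0 S"
    and P1: "cnt N c {x. 1 \<le> x} = 2 ^ t \<or> cnt N c {x. x \<le> -1} = 2 ^ t"
  shows "S = chips_at N c 0 \<and> cnt N c {x. 1 \<le> x} = 2 ^ t \<and> cnt N c {x. x \<le> -1} = 2 ^ t"
proof -
  have cS: "card S = 2 * 2 ^ t" using L le0 re0 unfolding legal_def by simp
  have n0: "2 * 2 ^ t \<le> cnt N c {0}" using legal_card_le[OF L] le0 re0 by simp
  have ni: "\<not> (\<forall>i<N. c i = 0)"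
  proof
    assume I: "\<forall>i<N. c i = 0"
    then show False using P1 init_cnt[OF I] by simp
  qed
  then have PQ: "cnt N c {x. 1 \<le> x} \<in> {2 ^ t, 2 * 2 ^ t}" "cnt N c {x. x \<le> -1} \<in> {2 ^ t, 2 * 2 ^ t}"
    using E unfolding EE_def by auto
  have part: "cnt N c {0} + cnt N c {x. 1 \<le> x} + cnt N c {x. x \<le> -1} = N" by (rule cnt_part0)
  have eq: "cnt N c {x. 1 \<le> x} = 2 ^ t" "cnt N c {x. x \<le> -1} = 2 ^ t" "cnt N c {0} = 2 * 2 ^ t"
    using PQ part n0 N P1 by auto
  have "S \<subseteq> chips_at N c 0" using L unfolding legal_def by simp
  moreover have "card S = card (chips_at N c 0)" using cS eq(3) cnt_chips by metis
  moreover have "finite (chips_at N c 0)" unfolding chips_at_def by simp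
  ultimately have "S = chips_at N c 0" by (intro card_subset_eq) auto
  then show ?thesis using eq by simp
qed

lemma PosC_step:
  assumes N: "N = 4 * 2 ^ t" and C: "PosC t N c" and AR: "PosA t N (refl N c)"
    and E: "EE t N c" and L: "legal t N c v S"
  shows "PosC t N (fire t v S c)"
  unfolding PosC_def
proof (intro impI allI)
  fix i assume P1': "cnt N (fire t v S c) {x. 1 \<le> x} = 2 * 2 ^ t" and i: "i < N" "fire t v S c i = 0"
  have ch: "int (cnt N (fire t v S c) {x. 1 \<le> x}) = int (cnt N c {x. 1 \<le> x})
     - (if v = 1 then int (left_edges t v) else 0) + (if v + 1 = 1 then int (right_edges t v) else 0)"
    using ge_change[OF L] .
  show "i < 3 * 2 ^ t"
  proof (cases "v = 0")
    case True
    then have "cnt N c {x. 1 \<le> x} = 2 ^ t" using ch P1' re0 by simp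
    then have "S = chips_at N c 0" using site0_full[OF N E] L True by blast
    then show ?thesis using i True unfolding chips_at_def by (auto simp: fire_rk split: if_splits)
  next
    case v0: False
    show ?thesis
    proof (cases "v = 1")
      case True
      then have h: "int (cnt N c {x. 1 \<le> x}) = int (3 * 2 ^ t)" using ch P1' l1 by simp
      then have "cnt N c {x. 1 \<le> x} = 3 * 2 ^ t" by (simp only: of_nat_eq_iff)
      moreover have "\<not> (\<forall>i<N. c i = 0)" using legal_init[OF L] True by auto
      ultimately show ?thesis using E unfolding EE_def by auto
    next
      case v1: False
      then have h: "int (cnt N c {x. 1 \<le> x}) = int (2 * 2 ^ t)" using ch P1' v0 by simp
      then have "cnt N c {x. 1 \<le> x} = 2 * 2 ^ t" by (simp only: of_nat_eq_iff)
      then have c0: "\<forall>j<N. c j = 0 \<longrightarrow> j < 3 * 2 ^ t" using C unfolding PosC_def by simp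
      show ?thesis
      proof (cases "i \<in> S")
        case False
        then show ?thesis using c0 i by (simp add: fire_rk)
      next
        case True
        then have "c i = v" using legal_sub[OF L] by simp
        moreover have "v = -1" using i True v1 by (auto simp: fire_rk split: if_splits)
        ultimately show ?thesis using reflA[OF AR N i(1)] by simp
      qed
    qed
  qed
qed

lemma PosD_step:
  assumes D: "PosD t N c" and L: "legal t N c v S"
  shows "PosD t N (fire t v S c)"
  unfolding PosD_def
proof
  fix k :: nat
  have ch: "int (cnt N (fire t v S c) {x. int k + 1 \<le> x}) = int (cnt N c {x. int k + 1 \<le> x})
     - (if v = int k + 1 then int (left_edges t v) else 0) + (if v + 1 = int k + 1 then int (right_edges t v) else 0)"
    using ge_change[OF L] .
  have d0: "int (edges t (int k)) dvd int (cnt N c {x. int k + 1 \<le> x})"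
    using D unfolding PosD_def by simp
  have d1: "int (edges t (int k)) dvd (if v = int k + 1 then int (left_edges t v) else 0)"
    unfolding left_edges_def by auto
  have d2: "int (edges t (int k)) dvd (if v + 1 = int k + 1 then int (right_edges t v) else 0)"
    unfolding right_edges_def by auto
  have "int (edges t (int k)) dvd int (cnt N (fire t v S c) {x. int k + 1 \<le> x})"
    unfolding ch using d0 d1 d2 by (intro dvd_add dvd_diff) auto
  then show "edges t (int k) dvd cnt N (fire t v S c) {x. int k + 1 \<le> x}" by simp
qed

lemma Pos_step:
  assumes N: "N = 4 * 2 ^ t" and P: "Pos t N c" and PR: "Pos t N (refl N c)"
    and E: "EE t N c" and L: "legal t N c v S"
  shows "Pos t N (fire t v S c)"
  using P PR unfolding Pos_def
  using PosA_step[OF N _ L] PosB_step[OF N _ _ _ E L] PosC_step[OF N _ _ E L] PosD_step[OF _ L]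
  by blast



lemma cnt_split_le: "cnt N c {x. x \<le> b} = cnt N c {b} + cnt N c {x. x \<le> b - 1}"
proof -
  have e: "{x. x \<le> b} = {b} \<union> {x. x \<le> b - 1}" by auto
  have "cnt N c ({b} \<union> {x. x \<le> b - 1}) = cnt N c {b} + cnt N c {x. x \<le> b - 1}"
    by (rule cnt_Un) auto
  then show ?thesis by (simp only: e)
qed

lemma EE_refl: "EE t N (refl N c) = EE t N c"
proof -
  have "(\<forall>i<N. refl N c i = 0) = (\<forall>i<N. c i = 0)"
  proof
    assume H: "\<forall>i<N. refl N c i = 0"
    show "\<forall>i<N. c i = 0"
    proof (intro allI impI)
      fix i assume i: "i < N"
      then have "N - 1 - i < N" by simp
      then have "refl N c (N - 1 - i) = 0" using H by blast
      then show "c i = 0" unfolding refl_def using i by simp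
    qed
  next
    assume "\<forall>i<N. c i = 0" then show "\<forall>i<N. refl N c i = 0" unfolding refl_def by simp
  qed
  moreover have "cnt N (refl N c) {x. 1 \<le> x} = cnt N c {x. x \<le> -1}" using cnt_refl_ge[of N c 1] by simp
  moreover have "cnt N (refl N c) {x. x \<le> -1} = cnt N c {x. 1 \<le> x}" using cnt_refl_le[of N c 1] by simp
  ultimately show ?thesis unfolding EE_def by auto
qed

lemma EE_step0:
  assumes N: "N = 4 * 2 ^ t" and E: "EE t N c" and L: "legal t N c v S" and v: "0 \<le> v"
  shows "EE t N (fire t v S c)"
proof -
  have chP: "int (cnt N (fire t v S c) {x. 1 \<le> x}) = int (cnt N c {x. 1 \<le> x})
     - (if v = 1 then int (left_edges t v) else 0) + (if v + 1 = 1 then int (right_edges t v) else 0)"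
    using ge_change[OF L] .
  have chQ: "int (cnt N (fire t v S c) {x. x \<le> -1}) = int (cnt N c {x. x \<le> -1})
     - (if v = -1 then int (right_edges t v) else 0) + (if v - 1 = -1 then int (left_edges t v) else 0)"
    using le_change[OF L] .
  show ?thesis
  proof (cases "v = 0")
    case v0: True
    show ?thesis
    proof (cases "\<forall>i<N. c i = 0")
      case True
      then have "cnt N c {x. 1 \<le> x} = 0" "cnt N c {x. x \<le> -1} = 0" using init_cnt by auto
      then have "int (cnt N (fire t v S c) {x. 1 \<le> x}) = int (2 ^ t)"
        "int (cnt N (fire t v S c) {x. x \<le> -1}) = int (2 ^ t)"
        using chP chQ v0 le0 re0 by auto
      then show ?thesis unfolding EE_def by (simp only: of_nat_eq_iff) simp
    next
      case False
      then have PQ: "cnt N c {x. 1 \<le> x} \<in> {2 ^ t, 2 * 2 ^ t}" "cnt N c {x. x \<le> -1} \<in> {2 ^ t, 2 * 2 ^ t}"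
        using E unfolding EE_def by auto
      have n0: "2 * 2 ^ t \<le> cnt N c {0}" using legal_card_le[OF L] le0 re0 v0 by simp
      have "cnt N c {0} + cnt N c {x. 1 \<le> x} + cnt N c {x. x \<le> -1} = N" by (rule cnt_part0)
      then have "cnt N c {x. 1 \<le> x} = 2 ^ t" "cnt N c {x. x \<le> -1} = 2 ^ t" using PQ n0 N by auto
      then have "int (cnt N (fire t v S c) {x. 1 \<le> x}) = int (2 * 2 ^ t)"
        "int (cnt N (fire t v S c) {x. x \<le> -1}) = int (2 * 2 ^ t)"
        using chP chQ v0 le0 re0 by auto
      then show ?thesis unfolding EE_def by (simp only: of_nat_eq_iff) simp
    qed
  next
    case v0: False
    have ni: "\<not> (\<forall>i<N. c i = 0)" using legal_init[OF L] v0 by auto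
    then have PQ: "cnt N c {x. 1 \<le> x} \<in> {2 ^ t, 2 * 2 ^ t}" "cnt N c {x. x \<le> -1} \<in> {2 ^ t, 2 * 2 ^ t}"
      using E unfolding EE_def by auto
    have Q: "cnt N (fire t v S c) {x. x \<le> -1} = cnt N c {x. x \<le> -1}" using chQ v v0 by simp
    show ?thesis
    proof (cases "v = 1")
      case True
      have cS: "2 ^ t + 1 \<le> cnt N c {1}"
        using legal_card_le[OF L] True l1 edges_ge1[of t 1] unfolding right_edges_def by simp
      have "cnt N c {1} \<le> cnt N c {x. 1 \<le> x}" by (rule cnt_mono) auto
      then have "cnt N c {x. 1 \<le> x} = 2 * 2 ^ t" using PQ cS by auto
      then have "int (cnt N (fire t v S c) {x. 1 \<le> x}) = int (2 ^ t)" using chP True l1 by simp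
      then have "cnt N (fire t v S c) {x. 1 \<le> x} = 2 ^ t" by (simp only: of_nat_eq_iff)
      then show ?thesis using Q PQ unfolding EE_def by simp
    next
      case False
      then have "cnt N (fire t v S c) {x. 1 \<le> x} = cnt N c {x. 1 \<le> x}" using chP v v0 by simp
      then show ?thesis using Q PQ unfolding EE_def by simp
    qed
  qed
qed

lemma PosB_cnt:
  assumes B: "PosB t N c" and j: "2 \<le> j"
  shows "cnt N c {x. int j \<le> x} \<le> 2 ^ (t + 2 - j)"
proof -
  have "{i. i < N \<and> c i \<in> {x. int j \<le> x}} \<subseteq> {N - 2 ^ (t + 2 - j)..<N}"
  proof
    fix i assume i: "i \<in> {i. i < N \<and> c i \<in> {x. int j \<le> x}}"
    then have i': "i < N" "int j \<le> c i" by auto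
    then have "N - 2 ^ (t + 2 - nat (c i)) \<le> i" using B j unfolding PosB_def by auto
    moreover have "(2::nat) ^ (t + 2 - nat (c i)) \<le> 2 ^ (t + 2 - j)"
      by (rule power_increasing) (use i' in auto)
    ultimately have "N - 2 ^ (t + 2 - j) \<le> i" by linarith
    then show "i \<in> {N - 2 ^ (t + 2 - j)..<N}" using i' by simp
  qed
  then have "cnt N c {x. int j \<le> x} \<le> card {N - 2 ^ (t + 2 - j)..<N}"
    unfolding cnt_def by (intro card_mono) auto
  then show ?thesis by simp
qed

lemma PosB_top:
  assumes B: "PosB t N c" and L: "legal t N c v S" and v: "2 \<le> v"
  shows "v \<le> int t + 1"
proof (rule ccontr)
  assume nv: "\<not> v \<le> int t + 1"
  have c2: "2 \<le> card S" using L edges_ge1[of t "v - 1"] edges_ge1[of t v]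
    unfolding legal_def left_edges_def right_edges_def by simp
  then obtain i where iS: "i \<in> S" by fastforce
  have "v \<le> int t + 2" using B legal_sub[OF L iS] v unfolding PosB_def by auto
  then have vt: "v = int t + 2" using nv by simp
  have "S \<subseteq> {N - 1}"
  proof
    fix j assume jS: "j \<in> S"
    then have "j < N" "c j = v" using legal_sub[OF L] by auto
    then have "N - 2 ^ (t + 2 - nat v) \<le> j" using B v unfolding PosB_def by auto
    then show "j \<in> {N - 1}" using vt \<open>j < N\<close> by simp
  qed
  then have "card S \<le> 1" using card_mono[of "{N - 1}" S] by simp
  then show False using c2 by simp
qed



definition Phi :: "nat \<Rightarrow> nat \<Rightarrow> (nat \<Rightarrow> int) \<Rightarrow> nat" where
  "Phi t N c = (\<Sum>k<t+2. 2 ^ (min k t) * cnt N c {x. int k + 1 \<le> x})"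

definition FF :: "nat \<Rightarrow> nat \<Rightarrow> (nat \<Rightarrow> int) \<Rightarrow> bool" where
  "FF t N c \<longleftrightarrow> Phi t N c = Phi t N (refl N c)"

lemma FF_refl: "FF t N (refl N c) = FF t N c" unfolding FF_def by auto

lemma Phi_refl: "Phi t N (refl N c) = (\<Sum>k<t+2. 2 ^ (min k t) * cnt N c {x. x \<le> - (int k + 1)})"
  unfolding Phi_def by (simp add: cnt_refl_ge)

lemma Phi_int: "int (Phi t N c) = (\<Sum>k<t+2. 2 ^ (min k t) * int (cnt N c {x. int k + 1 \<le> x}))"
  unfolding Phi_def by simp

lemma Phi_refl_int: "int (Phi t N (refl N c)) = (\<Sum>k<t+2. 2 ^ (min k t) * int (cnt N c {x. x \<le> - (int k + 1)}))"
  unfolding Phi_refl by simp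

lemma sum_lin: "(\<Sum>k\<in>A. (f k::int) * (a k - b k + c k)) = (\<Sum>k\<in>A. f k * a k) - (\<Sum>k\<in>A. f k * b k) + (\<Sum>k\<in>A. f k * c k)"
  by (simp add: sum.distrib sum_subtractf algebra_simps)

lemma Phi_change:
  assumes L: "legal t N c v S"
  shows "int (Phi t N (fire t v S c)) = int (Phi t N c)
    - (\<Sum>k<t+2. 2 ^ (min k t) * (if v = int k + 1 then int (left_edges t v) else 0))
    + (\<Sum>k<t+2. 2 ^ (min k t) * (if v + 1 = int k + 1 then int (right_edges t v) else 0))"
proof -
  have h: "\<And>k. int (cnt N (fire t v S c) {x. int k + 1 \<le> x}) = int (cnt N c {x. int k + 1 \<le> x})
     - (if v = int k + 1 then int (left_edges t v) else 0) + (if v + 1 = int k + 1 then int (right_edges t v) else 0)"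
    using ge_change[OF L] by blast
  have "int (Phi t N (fire t v S c)) = (\<Sum>k<t+2. 2 ^ (min k t) * (int (cnt N c {x. int k + 1 \<le> x})
     - (if v = int k + 1 then int (left_edges t v) else 0) + (if v + 1 = int k + 1 then int (right_edges t v) else 0)))"
    unfolding Phi_int by (rule sum.cong[OF refl]) (simp only: h)
  then show ?thesis unfolding sum_lin Phi_int .
qed

lemma Phi_refl_change:
  assumes L: "legal t N c v S"
  shows "int (Phi t N (refl N (fire t v S c))) = int (Phi t N (refl N c))
    - (\<Sum>k<t+2. 2 ^ (min k t) * (if v = - (int k + 1) then int (right_edges t v) else 0))
    + (\<Sum>k<t+2. 2 ^ (min k t) * (if v - 1 = - (int k + 1) then int (left_edges t v) else 0))"
proof -
  have h: "\<And>k. int (cnt N (fire t v S c) {x. x \<le> - (int k + 1)}) = int (cnt N c {x. x \<le> - (int k + 1)})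
     - (if v = - (int k + 1) then int (right_edges t v) else 0) + (if v - 1 = - (int k + 1) then int (left_edges t v) else 0)"
    using le_change[OF L] by blast
  have "int (Phi t N (refl N (fire t v S c))) = (\<Sum>k<t+2. 2 ^ (min k t) * (int (cnt N c {x. x \<le> - (int k + 1)})
     - (if v = - (int k + 1) then int (right_edges t v) else 0) + (if v - 1 = - (int k + 1) then int (left_edges t v) else 0)))"
    unfolding Phi_refl_int by (rule sum.cong[OF refl]) (simp only: h)
  then show ?thesis unfolding sum_lin Phi_refl_int .
qed

lemma sum_delta_gen:
  assumes "\<And>k. Q k = (k = a)"
  shows "(\<Sum>k<(n::nat). (f k::int) * (if Q k then L else 0)) = (if a < n then f a * L else 0)"
proof -
  have "(\<Sum>k<n. f k * (if Q k then L else 0)) = (\<Sum>k<n. if k = a then f k * L else 0)"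
    using assms by (intro sum.cong) auto
  also have "\<dots> = (if a \<in> {..<n} then f a * L else 0)" by (rule sum.delta) simp
  finally show ?thesis by simp
qed

lemma sum_zero_gen:
  assumes "\<And>k. \<not> Q k"
  shows "(\<Sum>k<(n::nat). (f k::int) * (if Q k then L else 0)) = 0"
  using assms by simp

lemma FF_step0:
  assumes N: "N = 4 * 2 ^ t" and F: "FF t N c" and B: "PosB t N c" and L: "legal t N c v S" and v: "0 \<le> v"
  shows "FF t N (fire t v S c)"
proof -
  have F': "int (Phi t N c) = int (Phi t N (refl N c))" using F unfolding FF_def by simp
  have Rr: "(\<Sum>k<t+2. 2 ^ (min k t) * (if v = - (int k + 1) then int (right_edges t v) else 0)) = 0"
    by (rule sum_zero_gen) (use v in auto)
  show ?thesis
  proof (cases "v = 0")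
    case True
    have Sl: "(\<Sum>k<t+2. 2 ^ (min k t) * (if v = int k + 1 then int (left_edges t v) else 0)) = 0"
      by (rule sum_zero_gen) (use True in auto)
    have Sr: "(\<Sum>k<t+2. 2 ^ (min k t) * (if v + 1 = int k + 1 then int (right_edges t v) else 0)) = 2 ^ t"
      by (subst sum_delta_gen[where a = 0]) (use True re0 in auto)
    have Rl: "(\<Sum>k<t+2. 2 ^ (min k t) * (if v - 1 = - (int k + 1) then int (left_edges t v) else 0)) = 2 ^ t"
      by (subst sum_delta_gen[where a = 0]) (use True le0 in auto)
    have "int (Phi t N (fire t v S c)) = int (Phi t N (refl N (fire t v S c)))"
      using Phi_change[OF L] Phi_refl_change[OF L] Sl Sr Rl Rr F' by simp
    then show ?thesis unfolding FF_def by simp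
  next
    case False
    then have v1: "1 \<le> v" using v by simp
    have vt: "v \<le> int t + 1"
    proof (cases "v = 1")
      case False then show ?thesis using PosB_top[OF B L] v1 by simp
    qed simp
    define j where "j = nat v"
    have j: "v = int j" "1 \<le> j" "j \<le> t + 1" using v1 vt unfolding j_def by auto
    have Sl: "(\<Sum>k<t+2. 2 ^ (min k t) * (if v = int k + 1 then int (left_edges t v) else 0)) = 2 ^ t"
    proof (subst sum_delta_gen[where a = "j - 1"])
      show "\<And>k. (v = int k + 1) = (k = j - 1)" using j by auto
      have "left_edges t v = 2 ^ (t - (j - 1))" unfolding left_edges_def
        using j edges_nat[of "j - 1" t] by (simp add: of_nat_diff)
      moreover have "min (j - 1) t = j - 1" using j by simp
      moreover have "(2::int) ^ (j - 1) * 2 ^ (t - (j - 1)) = 2 ^ t"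
        using j by (simp add: power_add[symmetric])
      ultimately show "(if j - 1 < t + 2 then 2 ^ min (j - 1) t * int (left_edges t v) else 0) = 2 ^ t"
        using j by simp
    qed
    have Sr: "(\<Sum>k<t+2. 2 ^ (min k t) * (if v + 1 = int k + 1 then int (right_edges t v) else 0)) = 2 ^ t"
    proof (subst sum_delta_gen[where a = "j"])
      show "\<And>k. (v + 1 = int k + 1) = (k = j)" using j by auto
      show "(if j < t + 2 then 2 ^ min j t * int (right_edges t v) else 0) = 2 ^ t"
      proof (cases "j \<le> t")
        case True
        have "right_edges t v = 2 ^ (t - j)" unfolding right_edges_def using j True edges_nat by simp
        moreover have "(2::int) ^ j * 2 ^ (t - j) = 2 ^ t" using True by (simp add: power_add[symmetric])
        ultimately show ?thesis using True j by simp
      next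
        case False
        then have "right_edges t v = 1" unfolding right_edges_def using j edges_high by simp
        then show ?thesis using False j by simp
      qed
    qed
    have Rl: "(\<Sum>k<t+2. 2 ^ (min k t) * (if v - 1 = - (int k + 1) then int (left_edges t v) else 0)) = 0"
      by (rule sum_zero_gen) (use v1 in auto)
    have "int (Phi t N (fire t v S c)) = int (Phi t N (refl N (fire t v S c)))"
      using Phi_change[OF L] Phi_refl_change[OF L] Sl Sr Rl Rr F' by simp
    then show ?thesis unfolding FF_def by simp
  qed
qed



definition GG :: "nat \<Rightarrow> nat \<Rightarrow> (nat \<Rightarrow> int) \<Rightarrow> bool" where
  "GG t N c \<longleftrightarrow> (cnt N c {x. 1 \<le> x} = 2 * 2 ^ t \<and> cnt N c {x. x \<le> -1} = 2 * 2 ^ t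
     \<and> cnt N c {x. 2 \<le> x} = 2 ^ t \<and> cnt N c {x. x \<le> -2} = 2 ^ t
     \<longrightarrow> (\<forall>x<N. \<forall>y<N. c x = -1 \<longrightarrow> c y = 1 \<longrightarrow> x < y))"

lemma GG_refl1: "GG t N c \<Longrightarrow> GG t N (refl N c)"
proof -
  assume G: "GG t N c"
  have e1: "cnt N (refl N c) {x. 1 \<le> x} = cnt N c {x. x \<le> -1}" using cnt_refl_ge[of N c 1] by simp
  have e2: "cnt N (refl N c) {x. x \<le> -1} = cnt N c {x. 1 \<le> x}" using cnt_refl_le[of N c 1] by simp
  have e3: "cnt N (refl N c) {x. 2 \<le> x} = cnt N c {x. x \<le> -2}" using cnt_refl_ge[of N c 2] by simp
  have e4: "cnt N (refl N c) {x. x \<le> -2} = cnt N c {x. 2 \<le> x}" using cnt_refl_le[of N c 2] by simp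
  show ?thesis unfolding GG_def e1 e2 e3 e4
  proof (intro impI allI)
    fix x y assume H: "cnt N c {x. x \<le> -1} = 2 * 2 ^ t \<and> cnt N c {x. 1 \<le> x} = 2 * 2 ^ t \<and>
       cnt N c {x. x \<le> -2} = 2 ^ t \<and> cnt N c {x. 2 \<le> x} = 2 ^ t"
      and xy: "x < N" "y < N" "refl N c x = -1" "refl N c y = 1"
    then have "c (N - 1 - x) = 1" "c (N - 1 - y) = -1" unfolding refl_def by auto
    moreover have "N - 1 - x < N" "N - 1 - y < N" using xy by auto
    ultimately have "N - 1 - y < N - 1 - x" using G H unfolding GG_def by blast
    then show "x < y" using xy by simp
  qed
qed

lemma GG_refl: "GG t N (refl N c) = GG t N c"
  using GG_refl1[of t N c] GG_refl1[of t N "refl N c"] by auto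

lemma GG_step0:
  assumes N: "N = 4 * 2 ^ t" and G: "GG t N c" and E: "EE t N c" and B: "PosB t N c"
    and L: "legal t N c v S" and v: "0 \<le> v"
  shows "GG t N (fire t v S c)"
  unfolding GG_def
proof (intro impI allI)
  let ?c' = "fire t v S c"
  fix x y
  assume H: "cnt N ?c' {x. 1 \<le> x} = 2 * 2 ^ t \<and> cnt N ?c' {x. x \<le> -1} = 2 * 2 ^ t
     \<and> cnt N ?c' {x. 2 \<le> x} = 2 ^ t \<and> cnt N ?c' {x. x \<le> -2} = 2 ^ t"
    and xy: "x < N" "y < N" "?c' x = -1" "?c' y = 1"
  have c1: "int (cnt N ?c' {x. 1 \<le> x}) = int (cnt N c {x. 1 \<le> x})
     - (if v = 1 then int (left_edges t v) else 0) + (if v + 1 = 1 then int (right_edges t v) else 0)"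
    using ge_change[OF L] .
  have c2: "int (cnt N ?c' {x. 2 \<le> x}) = int (cnt N c {x. 2 \<le> x})
     - (if v = 2 then int (left_edges t v) else 0) + (if v + 1 = 2 then int (right_edges t v) else 0)"
    using ge_change[OF L] .
  have d1: "int (cnt N ?c' {x. x \<le> -1}) = int (cnt N c {x. x \<le> -1})
     - (if v = -1 then int (right_edges t v) else 0) + (if v - 1 = -1 then int (left_edges t v) else 0)"
    using le_change[OF L] .
  have d2: "int (cnt N ?c' {x. x \<le> -2}) = int (cnt N c {x. x \<le> -2})
     - (if v = -2 then int (right_edges t v) else 0) + (if v - 1 = -2 then int (left_edges t v) else 0)"
    using le_change[OF L] .
  have P2le: "cnt N c {x. 2 \<le> x} \<le> 2 ^ t" using PosB_cnt[OF B, of 2] by simp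
  show "x < y"
    proof (cases "v = 0")
      case v0: True
      have "int (cnt N c {x. 1 \<le> x}) = int (2 ^ t)" using c1 H v0 re0 by simp
      then have P1: "cnt N c {x. 1 \<le> x} = 2 ^ t" by (simp only: of_nat_eq_iff)
      have "int (cnt N c {x. 2 \<le> x}) = int (2 ^ t)" using c2 H v0 by simp
      then have P2: "cnt N c {x. 2 \<le> x} = 2 ^ t" by (simp only: of_nat_eq_iff)
      have "int (cnt N c {x. x \<le> -2}) = int (2 ^ t)" using d2 H v0 by simp
      then have Q2: "cnt N c {x. x \<le> -2} = 2 ^ t" by (simp only: of_nat_eq_iff)
      have SF: "S = chips_at N c 0 \<and> cnt N c {x. 1 \<le> x} = 2 ^ t \<and> cnt N c {x. x \<le> -1} = 2 ^ t"
        using site0_full[OF N E] L v0 P1 by blast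
      have n1: "cnt N c {1} = 0" using cnt_split_ge[of N c 1] P1 P2 by simp
      have nm1: "cnt N c {-1} = 0" using cnt_split_le[of N c "-1"] SF Q2 by simp
      have fin: "finite S" using legal_fin[OF L] .
      have xS: "x \<in> S"
      proof (rule ccontr)
        assume "x \<notin> S"
        then have "c x = -1" using xy by (simp add: fire_rk)
        then have "x \<in> {i. i < N \<and> c i \<in> {-1}}" using xy by simp
        then have "{i. i < N \<and> c i \<in> {-1}} \<noteq> {}" by blast
        moreover have "finite {i. i < N \<and> c i \<in> {-1}}" by simp
        ultimately show False using nm1 unfolding cnt_def by (simp only: card_0_eq)
      qed
      have yS: "y \<in> S"
      proof (rule ccontr)
        assume "y \<notin> S"
        then have "c y = 1" using xy by (simp add: fire_rk)
        then have "y \<in> {i. i < N \<and> c i \<in> {1}}" using xy by simp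
        then have "{i. i < N \<and> c i \<in> {1}} \<noteq> {}" by blast
        moreover have "finite {i. i < N \<and> c i \<in> {1}}" by simp
        ultimately show False using n1 unfolding cnt_def by (simp only: card_0_eq)
      qed
      have "rk S x < left_edges t v" using xy xS v0 by (auto simp: fire_rk split: if_splits)
      moreover have "\<not> rk S y < left_edges t v" using xy yS v0 by (auto simp: fire_rk split: if_splits)
      ultimately show ?thesis using rk_lt_imp[OF fin] by simp
    next
      case v0: False
      have ni: "\<not> (\<forall>i<N. c i = 0)" using legal_init[OF L] v0 by auto
      then have PQ: "cnt N c {x. 1 \<le> x} \<in> {2 ^ t, 2 * 2 ^ t}" using E unfolding EE_def by auto
      show ?thesis
      proof (cases "v = 1")
        case True
        have "int (cnt N c {x. 1 \<le> x}) = int (3 * 2 ^ t)" using c1 H True l1 by simp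
        then have "cnt N c {x. 1 \<le> x} = 3 * 2 ^ t" by (simp only: of_nat_eq_iff)
        then show ?thesis using PQ by auto
      next
        case v1: False
        show ?thesis
        proof (cases "v = 2")
          case True
          have "int (cnt N c {x. 2 \<le> x}) = int (2 ^ t + left_edges t 2)" using c2 H True by simp
          then have "cnt N c {x. 2 \<le> x} = 2 ^ t + left_edges t 2" by (simp only: of_nat_eq_iff)
          then show ?thesis using P2le edges_ge1[of t 1] unfolding left_edges_def by simp
        next
          case v2: False
          have "int (cnt N c {x. 1 \<le> x}) = int (2 * 2 ^ t)" using c1 H v0 v1 by simp
          then have P1: "cnt N c {x. 1 \<le> x} = 2 * 2 ^ t" by (simp only: of_nat_eq_iff)
          have "int (cnt N c {x. 2 \<le> x}) = int (2 ^ t)" using c2 H v1 v2 by simp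
          then have P2: "cnt N c {x. 2 \<le> x} = 2 ^ t" by (simp only: of_nat_eq_iff)
          have "int (cnt N c {x. x \<le> -1}) = int (2 * 2 ^ t)" using d1 H v v0 by simp
          then have Q1: "cnt N c {x. x \<le> -1} = 2 * 2 ^ t" by (simp only: of_nat_eq_iff)
          have "int (cnt N c {x. x \<le> -2}) = int (2 ^ t)" using d2 H v v0 by simp
          then have Q2: "cnt N c {x. x \<le> -2} = 2 ^ t" by (simp only: of_nat_eq_iff)
          have v3: "3 \<le> v" using v v0 v1 v2 by simp
          have "x \<notin> S" using xy v3 by (auto simp: fire_rk split: if_splits)
          then have cx: "c x = -1" using xy by (simp add: fire_rk)
          have "y \<notin> S" using xy v3 by (auto simp: fire_rk split: if_splits)
          then have cy: "c y = 1" using xy by (simp add: fire_rk)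
          show ?thesis using G P1 P2 Q1 Q2 cx cy xy unfolding GG_def by blast
        qed
      qed
    qed
qed



definition Inv :: "nat \<Rightarrow> nat \<Rightarrow> (nat \<Rightarrow> int) \<Rightarrow> bool" where
  "Inv t N c \<longleftrightarrow> Pos t N c \<and> Pos t N (refl N c) \<and> EE t N c \<and> FF t N c \<and> GG t N c"

lemma Inv_refl: "Inv t N c \<Longrightarrow> Inv t N (refl N c)"
  unfolding Inv_def using EE_refl FF_refl GG_refl by auto

lemma Inv_step:
  assumes N: "N = 4 * 2 ^ t" and I: "Inv t N c" and S: "step t N c c'"
  shows "Inv t N c'"
proof -
  obtain v S where L: "legal t N c v S" and c': "c' = fire t v S c" using S unfolding step_legal by blast
  let ?S' = "(\<lambda>i. N - 1 - i) ` S"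
  have RL: "legal t N (refl N c) (- v) ?S'" and Rc': "refl N c' = fire t (- v) ?S' (refl N c)"
    using refl_legal[OF L] c' by auto
  have P: "Pos t N c" and PR: "Pos t N (refl N c)" and E: "EE t N c" and F: "FF t N c" and G: "GG t N c"
    using I unfolding Inv_def by auto
  have ER: "EE t N (refl N c)" using E EE_refl by simp
  have FR: "FF t N (refl N c)" using F FF_refl by simp
  have GR: "GG t N (refl N c)" using G GG_refl by simp
  have B: "PosB t N c" and BR: "PosB t N (refl N c)" using P PR unfolding Pos_def by auto
  have P': "Pos t N c'" using Pos_step[OF N P PR E L] c' by simp
  have PR': "Pos t N (refl N c')" using Pos_step[OF N PR _ ER RL] P Rc' by simp
  have EFG: "EE t N c' \<and> FF t N c' \<and> GG t N c'"
  proof (cases "0 \<le> v")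
    case True
    then show ?thesis using EE_step0[OF N E L] FF_step0[OF N F B L] GG_step0[OF N G E B L] c' by simp
  next
    case False
    then have v': "0 \<le> - v" by simp
    have "EE t N (refl N c') \<and> FF t N (refl N c') \<and> GG t N (refl N c')"
      using EE_step0[OF N ER RL v'] FF_step0[OF N FR BR RL v'] GG_step0[OF N GR ER BR RL v'] Rc' by simp
    then show ?thesis using EE_refl FF_refl GG_refl by auto
  qed
  show ?thesis unfolding Inv_def using P' PR' EFG by simp
qed

lemma Inv_init:
  assumes N: "N = 4 * 2 ^ t"
  shows "Inv t N (\<lambda>_. 0)"
proof -
  have r: "refl N (\<lambda>_. 0) = (\<lambda>_. 0)" unfolding refl_def by auto
  have z: "\<forall>i<N. (\<lambda>_. 0::int) i = 0" by simp
  have P: "Pos t N (\<lambda>_. 0)"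
    unfolding Pos_def PosA_def PosB_def PosC_def PosD_def using init_cnt[OF z] by simp
  have E: "EE t N (\<lambda>_. 0)" unfolding EE_def by simp
  have G: "GG t N (\<lambda>_. 0)" unfolding GG_def using init_cnt[OF z] by simp
  show ?thesis unfolding Inv_def FF_def r using P E G by simp
qed

lemma Inv_reach:
  assumes N: "N = 4 * 2 ^ t" and R: "(step t N)\<^sup>*\<^sup>* (\<lambda>_. 0) c"
  shows "Inv t N c"
  using R
proof (induction rule: rtranclp_induct)
  case base
  then show ?case using Inv_init[OF N] .
next
  case (step y z)
  then show ?case using Inv_step[OF N] by blast
qed



lemma PosB_sub:
  assumes B: "PosB t N c" and j: "2 \<le> j"
  shows "{i. i < N \<and> c i \<in> {x. int j \<le> x}} \<subseteq> {N - 2 ^ (t + 2 - j)..<N}"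
proof
  fix i assume i: "i \<in> {i. i < N \<and> c i \<in> {x. int j \<le> x}}"
  then have i': "i < N" "int j \<le> c i" by auto
  then have "N - 2 ^ (t + 2 - nat (c i)) \<le> i" using B j unfolding PosB_def by auto
  moreover have "(2::nat) ^ (t + 2 - nat (c i)) \<le> 2 ^ (t + 2 - j)"
    by (rule power_increasing) (use i' in auto)
  ultimately have "N - 2 ^ (t + 2 - j) \<le> i" by linarith
  then show "i \<in> {N - 2 ^ (t + 2 - j)..<N}" using i' by simp
qed

lemma stable_at: "stable t N c \<Longrightarrow> cnt N c {v} < left_edges t v + right_edges t v"
  unfolding stable_def by (metis cnt_chips)

lemma chain:
  assumes N: "N = 4 * 2 ^ t" and P: "Pos t N c" and S: "stable t N c"
    and P1: "cnt N c {x. 1 \<le> x} = 2 * 2 ^ t"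
  shows "k \<le> t + 1 \<Longrightarrow> cnt N c {x. int k + 1 \<le> x} = 2 ^ (t + 1 - k)"
proof (induction k)
  case 0
  then show ?case using P1 by simp
next
  case (Suc k)
  then have IH: "cnt N c {x. int k + 1 \<le> x} = 2 ^ (t + 1 - k)" and k: "k \<le> t" by auto
  have B: "PosB t N c" and D: "PosD t N c" using P unfolding Pos_def by auto
  have sp: "cnt N c {x. int k + 1 \<le> x} = cnt N c {int k + 1} + cnt N c {x. int k + 1 + 1 \<le> x}"
    by (rule cnt_split_ge)
  have st: "cnt N c {int k + 1} < left_edges t (int k + 1) + right_edges t (int k + 1)"
    using stable_at[OF S] .
  have le: "left_edges t (int k + 1) = 2 ^ (t - k)" unfolding left_edges_def using edges_nat[OF k] by simp
  have ub: "cnt N c {x. int (k + 2) \<le> x} \<le> 2 ^ (t + 2 - (k + 2))" using PosB_cnt[OF B, of "k + 2"] by simp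
  have dv: "edges t (int (k + 1)) dvd cnt N c {x. int (k + 1) + 1 \<le> x}" using D unfolding PosD_def by blast
  have e1: "{x. int (k + 1) + 1 \<le> x} = {x. int k + 1 + 1 \<le> x}" by simp
  have e2: "{x. int (k + 2) \<le> x} = {x. int k + 1 + 1 \<le> x}" by auto
  let ?P = "cnt N c {x. int k + 1 + 1 \<le> x}"
  show ?case
  proof (cases "k = t")
    case True
    have "right_edges t (int k + 1) = 1" unfolding right_edges_def using True edges_high by simp
    then have "0 < ?P" using sp st IH le True by simp
    moreover have "?P \<le> 1" using ub e2 True by simp
    ultimately show ?thesis using True by simp
  next
    case False
    then have kt: "k + 1 \<le> t" using k by simp
    define e where "e = (2::nat) ^ (t - (k + 1))"
    have e0: "0 < e" unfolding e_def by simp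
    have re: "right_edges t (int k + 1) = e" unfolding right_edges_def e_def using edges_nat[OF kt] by (simp add: add.commute)
    have p1: "(2::nat) ^ (t - k) = 2 * e" unfolding e_def using kt by (simp add: Suc_diff_Suc[symmetric] flip: power_Suc)
    have p2: "(2::nat) ^ (t + 1 - k) = 4 * e" unfolding e_def using kt
    proof -
      have "t + 1 - k = Suc (Suc (t - (k + 1)))" using kt by simp
      then show "(2::nat) ^ (t + 1 - k) = 4 * 2 ^ (t - (k + 1))" by simp
    qed
    obtain m where m: "?P = e * m" using dv e1 edges_nat[OF kt] unfolding e_def by (auto elim!: dvdE)
    have "4 * e < 3 * e + ?P" using sp st IH le re p1 p2 by simp
    then have "e * 1 < e * m" using m by simp
    then have m1: "1 < m" using e0 by (simp only: mult_less_cancel1)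
    have "e * m \<le> e * 2" using ub e2 m p1 by simp
    then have m2: "m \<le> 2" using e0 by simp
    then have "m = 2" using m1 by simp
    then show ?thesis using m p1 by simp
  qed
qed

lemma outer:
  assumes N: "N = 4 * 2 ^ t" and P: "Pos t N c"
    and ch: "\<forall>k \<le> t + 1. cnt N c {x. int k + 1 \<le> x} = 2 ^ (t + 1 - k)"
    and ab: "a < b" "b < N" and ca: "2 \<le> c a"
  shows "c a \<le> c b"
proof -
  have B: "PosB t N c" using P unfolding Pos_def by auto
  have vt: "c a \<le> int t + 2" using B ab ca unfolding PosB_def by auto
  define j where "j = nat (c a)"
  have j: "2 \<le> j" "j \<le> t + 2" "c a = int j" using ca vt unfolding j_def by auto
  have "j - 1 \<le> t + 1" using j by simp
  then have "cnt N c {x. int (j - 1) + 1 \<le> x} = 2 ^ (t + 1 - (j - 1))" using ch by blast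
  moreover have "{x. int (j - 1) + 1 \<le> x} = {x. int j \<le> x}" using j by auto
  moreover have "t + 1 - (j - 1) = t + 2 - j" using j by simp
  ultimately have cT: "cnt N c {x. int j \<le> x} = 2 ^ (t + 2 - j)" by simp
  let ?T = "{i. i < N \<and> c i \<in> {x. int j \<le> x}}"
  let ?I = "{N - 2 ^ (t + 2 - j)..<N}"
  have sub: "?T \<subseteq> ?I" using PosB_sub[OF B j(1)] .
  have "(2::nat) ^ (t + 2 - j) \<le> 2 ^ (t + 2)" by (rule power_increasing) auto
  then have le: "(2::nat) ^ (t + 2 - j) \<le> N" using N by (simp add: power_add)
  have "card ?T = card ?I" using cT le unfolding cnt_def by simp
  then have TI: "?T = ?I" using sub by (intro card_subset_eq) auto
  have "a \<in> ?T" using ab j by simp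
  then have "a \<in> ?I" unfolding TI .
  then have "b \<in> ?I" using ab by simp
  then have "b \<in> ?T" unfolding TI .
  then show ?thesis using j by simp
qed

lemma both:
  assumes N: "N = 4 * 2 ^ t" and I: "Inv t N c" and S: "stable t N c"
    and P1: "cnt N c {x. 1 \<le> x} = 2 * 2 ^ t"
  shows "cnt N c {x. x \<le> -1} = 2 * 2 ^ t"
proof (rule ccontr)
  assume ne: "cnt N c {x. x \<le> -1} \<noteq> 2 * 2 ^ t"
  have P: "Pos t N c" and PR: "Pos t N (refl N c)" and E: "EE t N c" and F: "FF t N c"
    using I unfolding Inv_def by auto
  have ch: "\<And>k. k \<le> t + 1 \<Longrightarrow> cnt N c {x. int k + 1 \<le> x} = 2 ^ (t + 1 - k)"
    using chain[OF N P S P1] by blast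
  have ni: "\<not> (\<forall>i<N. c i = 0)"
  proof
    assume "\<forall>i<N. c i = 0"
    then have "cnt N c {x. 1 \<le> x} = 0" using init_cnt[of N c] by simp
    then show False using P1 by simp
  qed
  then have Q1: "cnt N c {x. x \<le> -1} \<in> {2 ^ t, 2 * 2 ^ t}" using E unfolding EE_def by auto
  then have Q1': "cnt N c {x. x \<le> -1} = 2 ^ t" using ne by simp
  have BR: "PosB t N (refl N c)" using PR unfolding Pos_def by auto
  have "Phi t N (refl N c) < Phi t N c"
    unfolding Phi_def
  proof (rule sum_strict_mono_ex1)
    show "finite {..<t + 2}" by simp
    show "\<forall>k\<in>{..<t + 2}. 2 ^ min k t * cnt N (refl N c) {x. int k + 1 \<le> x} \<le> 2 ^ min k t * cnt N c {x. int k + 1 \<le> x}"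
    proof
      fix k assume k: "k \<in> {..<t + 2}"
      have "cnt N (refl N c) {x. int k + 1 \<le> x} \<le> 2 ^ (t + 1 - k)"
      proof (cases "k = 0")
        case True
        then show ?thesis using Q1' cnt_refl_ge[of N c 1] by simp
      next
        case False
        have "cnt N (refl N c) {x. int (k + 1) \<le> x} \<le> 2 ^ (t + 2 - (k + 1))"
          using PosB_cnt[OF BR, of "k + 1"] False by simp
        then show ?thesis by (simp add: add.commute)
      qed
      then show "2 ^ min k t * cnt N (refl N c) {x. int k + 1 \<le> x} \<le> 2 ^ min k t * cnt N c {x. int k + 1 \<le> x}"
        using ch[of k] k by simp
    qed
    show "\<exists>k\<in>{..<t + 2}. 2 ^ min k t * cnt N (refl N c) {x. int k + 1 \<le> x} < 2 ^ min k t * cnt N c {x. int k + 1 \<le> x}"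
      using Q1' cnt_refl_ge[of N c 1] P1 by (intro bexI[of _ 0]) auto
  qed
  then show False using F unfolding FF_def by simp
qed

lemma final:
  assumes N: "N = 4 * 2 ^ t" and I: "Inv t N c" and S: "stable t N c"
  shows "\<forall>a b. a < b \<and> b < N \<longrightarrow> c a \<le> c b"
proof -
  have P: "Pos t N c" and PR: "Pos t N (refl N c)" and E: "EE t N c" and G: "GG t N c"
    using I unfolding Inv_def by auto
  have IR: "Inv t N (refl N c)" using Inv_refl[OF I] .
  have SR: "stable t N (refl N c)" using refl_stable[OF S] .
  have n0: "cnt N c {0} < 2 * 2 ^ t" using stable_at[OF S, of 0] le0 re0 by simp
  have ni: "\<not> (\<forall>i<N. c i = 0)"
  proof
    assume "\<forall>i<N. c i = 0"
    then have "cnt N c {0} = N" using init_cnt[of N c] by simp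
    then show False using n0 N by simp
  qed
  then have PQ: "cnt N c {x. 1 \<le> x} \<in> {2 ^ t, 2 * 2 ^ t}" "cnt N c {x. x \<le> -1} \<in> {2 ^ t, 2 * 2 ^ t}"
    using E unfolding EE_def by auto
  have part: "cnt N c {0} + cnt N c {x. 1 \<le> x} + cnt N c {x. x \<le> -1} = N" by (rule cnt_part0)
  have or: "cnt N c {x. 1 \<le> x} = 2 * 2 ^ t \<or> cnt N c {x. x \<le> -1} = 2 * 2 ^ t"
    using PQ part n0 N by auto
  have rg1: "cnt N (refl N c) {x. 1 \<le> x} = cnt N c {x. x \<le> -1}" using cnt_refl_ge[of N c 1] by simp
  have rl1: "cnt N (refl N c) {x. x \<le> -1} = cnt N c {x. 1 \<le> x}" using cnt_refl_le[of N c 1] by simp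
  have P1: "cnt N c {x. 1 \<le> x} = 2 * 2 ^ t" and Q1: "cnt N c {x. x \<le> -1} = 2 * 2 ^ t"
  proof -
    from or show "cnt N c {x. 1 \<le> x} = 2 * 2 ^ t"
    proof
      assume "cnt N c {x. x \<le> -1} = 2 * 2 ^ t"
      then show ?thesis using both[OF N IR SR] rg1 rl1 by simp
    qed simp
    from or show "cnt N c {x. x \<le> -1} = 2 * 2 ^ t"
    proof
      assume "cnt N c {x. 1 \<le> x} = 2 * 2 ^ t"
      then show ?thesis using both[OF N I S] by simp
    qed simp
  qed
  have chc: "\<forall>k \<le> t + 1. cnt N c {x. int k + 1 \<le> x} = 2 ^ (t + 1 - k)"
    using chain[OF N P S P1] by blast
  have chr: "\<forall>k \<le> t + 1. cnt N (refl N c) {x. int k + 1 \<le> x} = 2 ^ (t + 1 - k)"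
    using chain[OF N PR SR] Q1 rg1 by simp
  have z0: "cnt N c {0} = 0" using part P1 Q1 N by simp
  have P2: "cnt N c {x. 2 \<le> x} = 2 ^ t" using chc[rule_format, of 1] by simp
  have Q2: "cnt N c {x. x \<le> -2} = 2 ^ t" using chr[rule_format, of 1] cnt_refl_ge[of N c 2] by simp
  have ord: "\<forall>x<N. \<forall>y<N. c x = -1 \<longrightarrow> c y = 1 \<longrightarrow> x < y" using G P1 Q1 P2 Q2 unfolding GG_def by blast
  show ?thesis
  proof (intro allI impI)
    fix a b assume ab: "a < b \<and> b < N"
    show "c a \<le> c b"
    proof (rule ccontr)
      assume lt: "\<not> c a \<le> c b"
      show False
      proof (cases "2 \<le> c a")
        case True
        then show False using outer[OF N P chc] ab lt by blast
      next
        case ca: False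
        show False
        proof (cases "c b \<le> -2")
          case True
          have "N - 1 - b < N - 1 - a" "N - 1 - a < N" using ab by auto
          moreover have "refl N c (N - 1 - b) = - c b" "refl N c (N - 1 - a) = - c a"
            unfolding refl_def using ab by auto
          ultimately have "- c b \<le> - c a" using outer[OF N PR chr, of "N - 1 - b" "N - 1 - a"] True by simp
          then show False using lt by simp
        next
          case cb: False
          have nz: "\<And>i. i < N \<Longrightarrow> c i \<noteq> 0"
          proof
            fix i assume "i < N" "c i = 0"
            then have "i \<in> {i. i < N \<and> c i \<in> {0}}" by simp
            then have "{i. i < N \<and> c i \<in> {0}} \<noteq> {}" by blast
            moreover have "finite {i. i < N \<and> c i \<in> {0}}" by simp
            ultimately show False using z0 unfolding cnt_def by (simp only: card_0_eq)
          qed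
          have "c a = 1" "c b = -1" using ca cb lt nz[of a] nz[of b] ab by auto
          then have "b < a" using ord ab by auto
          then show False using ab by simp
        qed
      qed
    qed
  qed
qed

theorem theorem3p7:
  fixes t :: nat and c :: "nat \<Rightarrow> int"
  assumes "(step t (2 ^ (t + 2)))\<^sup>*\<^sup>* (\<lambda>_. 0) c"
    and "stable t (2 ^ (t + 2)) c"
  shows "\<forall>a b. a < b \<and> b < 2 ^ (t + 2) \<longrightarrow> c a \<le> c b"
proof -
  have N: "(2::nat) ^ (t + 2) = 4 * 2 ^ t" by (simp add: power_add)
  show ?thesis using final[OF N Inv_reach[OF N assms(1)] assms(2)] .
qed

end
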